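(* For a topological space $X$ the following are equivalent: (1) $X$ is an Alster space; (2) $X$ satisfies ${\sf S}_1(\mathcal{G}_K,\mathcal{G})$; (3) ${\sf S}_1(\mathcal{G}_K,\mathcal{G}_\Omega)$; (4) ${\sf S}_1(\mathcal{G}_K,\mathcal{G}^{gp})$; (5) ${\sf S}_1(\mathcal{G}_K,\mathcal{G}_\Omega^{gp})$; (6) ${\sf S}_{fin}(\mathcal{G}_K,\mathcal{G})$; (7) ${\sf S}_{fin}(\mathcal{G}_K,\mathcal{G}^{gp})$; (8) ${\sf S}_{fin}(\mathcal{G}_K,\mathcal{G}_\Omega^{gp})$.
   Context: All spaces are infinite ${\sf T}_1$ topological spaces. $\mathcal{G}_K$ is the family of all collections $\mathcal{U}$ of ${\sf G}_\delta$ subsets of $X$ with $X\notin\mathcal{U}$ such that each compact subset of $X$ is contained in some member of $\mathcal{U}$. $\mathcal{G}$ is the family of all covers of $X$ by ${\sf G}_\delta$ sets. $\mathcal{G}_\Omega$ is the family of $\mathcal{U}\in\mathcal{G}$ with $X\notin\mathcal{U}$ such that every finite subset of $X$ is contained in some member of $\mathcal{U}$. $\mathcal{G}^{gp}$ is the family of $\mathcal{U}\in\mathcal{G}$ admitting a partition $\mathcal{U}=\bigcup_{n\in\mathbb{N}}\mathcal{U}_n$ into pairwise disjoint finite sets such that each $x\in X$ lies in $\bigcup\mathcal{U}_n$ for all but finitely many $n$; $\mathcal{G}_\Omega^{gp}=\mathcal{G}_\Omega\cap\mathcal{G}^{gp}$. $X$ is an Alster space if every member of $\mathcal{G}_K$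 has a countable subfamily covering $X$. ${\sf S}_1(\mathcal{A},\mathcal{B})$: for each sequence $(A_n)$ of elements of $\mathcal{A}$ there are $B_n\in A_n$ with $\{B_n:n\in\mathbb{N}\}\in\mathcal{B}$. ${\sf S}_{fin}(\mathcal{A},\mathcal{B})$: for each sequence $(A_n)$ of elements of $\mathcal{A}$ there are finite $B_n\subseteq A_n$ with $\bigcup_n B_n\in\mathcal{B}$. *)

theory Defs
  imports "HOL-Analysis.Analysis"
begin

definition GK :: "'a topology \<Rightarrow> 'a set set set" where
  "GK X = {U. (\<forall>G\<in>U. gdelta_in X G) \<and> topspace X \<notin> U \<and>
              (\<forall>K. compactin X K \<longrightarrow> (\<exists>G\<in>U. K \<subseteq> G))}"

definition GCov :: "'a topology \<Rightarrow> 'a set set set" where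
  "GCov X = {U. (\<forall>G\<in>U. gdelta_in X G) \<and> \<Union>U = topspace X}"

definition GOmega :: "'a topology \<Rightarrow> 'a set set set" where
  "GOmega X = {U \<in> GCov X. topspace X \<notin> U \<and>
              (\<forall>F. finite F \<and> F \<subseteq> topspace X \<longrightarrow> (\<exists>G\<in>U. F \<subseteq> G))}"

definition Ggp :: "'a topology \<Rightarrow> 'a set set set" where
  "Ggp X = {U \<in> GCov X. \<exists>P :: nat \<Rightarrow> 'a set set.
              (\<forall>n. finite (P n)) \<and> disjoint_family P \<and> U = (\<Union>n. P n) \<and>
              (\<forall>x\<in>topspace X. \<forall>\<^sub>F n in sequentially. x \<in> \<Union>(P n))}"

definition GOmega_gp :: "'a topology \<Rightarrow> 'a set set set" where
  "GOmega_gp X = GOmega X \<inter> Ggp X"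

definition Alster :: "'a topology \<Rightarrow> bool" where
  "Alster X \<longleftrightarrow> (\<forall>U\<in>GK X. \<exists>V. V \<subseteq> U \<and> countable V \<and> topspace X \<subseteq> \<Union>V)"

definition S1 :: "'b set set set \<Rightarrow> 'b set set set \<Rightarrow> bool" where
  "S1 A B \<longleftrightarrow> (\<forall>S :: nat \<Rightarrow> 'b set set. (\<forall>n. S n \<in> A) \<longrightarrow>
      (\<exists>b :: nat \<Rightarrow> 'b set. (\<forall>n. b n \<in> S n) \<and> range b \<in> B))"

definition Sfin :: "'b set set set \<Rightarrow> 'b set set set \<Rightarrow> bool" where
  "Sfin A B \<longleftrightarrow> (\<forall>S :: nat \<Rightarrow> 'b set set. (\<forall>n. S n \<in> A) \<longrightarrow>
      (\<exists>F :: nat \<Rightarrow> 'b set set. (\<forall>n. finite (F n) \<and> F n \<subseteq> S n) \<and> (\<Union>n. F n) \<in> B))"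

end

theory Submission
  imports Defs
begin

lemma GK_infinite:
  assumes "U \<in> GK X" shows "infinite U"
proof
  assume fin: "finite U"
  have "\<forall>G\<in>U. \<exists>x. x \<in> topspace X \<and> x \<notin> G"
  proof
    fix G assume "G \<in> U"
    then have "G \<subseteq> topspace X" "G \<noteq> topspace X" using assms gdelta_in_subset unfolding GK_def by auto
    then show "\<exists>x. x \<in> topspace X \<and> x \<notin> G" by blast
  qed
  then obtain p where p: "\<forall>G\<in>U. p G \<in> topspace X \<and> p G \<notin> G" by metis
  have "compactin X (p ` U)" using p fin by (intro finite_imp_compactin) auto
  then obtain G where "G \<in> U" "p ` U \<subseteq> G" using assms unfolding GK_def by blast
  then show False using p by blast
qed

lemma GK_restrict:
  assumes "U \<in> GK X" "compactin X K" shows "{G \<in> U. K \<subseteq> G} \<in> GK X"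
proof -
  have "\<exists>G\<in>{G \<in> U. K \<subseteq> G}. L \<subseteq> G" if "compactin X L" for L
  proof -
    have "compactin X (K \<union> L)" using assms(2) that by (rule compactin_Un)
    then obtain G where "G \<in> U" "K \<union> L \<subseteq> G" using assms(1) unfolding GK_def by blast
    then show ?thesis by blast
  qed
  then show ?thesis using assms(1) unfolding GK_def by auto
qed

primrec gl :: "(nat \<Rightarrow> 'b set) \<Rightarrow> nat \<Rightarrow> 'b list" where
  "gl D 0 = []"
| "gl D (Suc n) = gl D n @ [SOME G. G \<in> D n \<and> G \<notin> set (gl D n)]"

lemma gl_length: "length (gl D n) = n"
  by (induction n) auto

lemma gl_nth: "k < n \<Longrightarrow> gl D n ! k = gl D (Suc k) ! k"
proof (induction n)
  case 0 then show ?case by simp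
next
  case (Suc n)
  show ?case
  proof (cases "k < n")
    case True
    then show ?thesis using Suc by (simp add: nth_append gl_length)
  next
    case False
    then have "k = n" using Suc by simp
    then show ?thesis by simp
  qed
qed

lemma inj_select:
  fixes D :: "nat \<Rightarrow> 'b set"
  assumes inf: "\<And>n. infinite (D n)"
  shows "\<exists>b. inj b \<and> (\<forall>n. b n \<in> D n)"
proof -
  define b where "b n = gl D (Suc n) ! n" for n
  have bdef: "b n = (SOME G. G \<in> D n \<and> G \<notin> set (gl D n))" for n
    by (simp add: b_def nth_append gl_length)
  have ex: "\<exists>G. G \<in> D n \<and> G \<notin> set (gl D n)" for n
  proof -
    have "infinite (D n - set (gl D n))" using inf[of n] by simp
    then have "D n - set (gl D n) \<noteq> {}" by (metis finite.emptyI)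
    then show ?thesis by blast
  qed
  have bprop: "b n \<in> D n \<and> b n \<notin> set (gl D n)" for n
    unfolding bdef using someI_ex[OF ex[of n]] .
  have setgl: "k < n \<Longrightarrow> b k \<in> set (gl D n)" for k n
    by (metis b_def gl_length gl_nth nth_mem)
  have "inj b"
  proof (rule injI)
    fix x y assume "b x = b y"
    show "x = y"
    proof (rule ccontr)
      assume "x \<noteq> y"
      then have "x < y \<or> y < x" by arith
      then show False using setgl bprop \<open>b x = b y\<close> by metis
    qed
  qed
  then show ?thesis using bprop by blast
qed

definition Good :: "(nat \<Rightarrow> 'a set set) \<Rightarrow> (nat \<Rightarrow> 'a set set) \<Rightarrow> bool" where
  "Good U D \<longleftrightarrow> (\<forall>n. D n \<subseteq> U n \<and> countable (D n) \<and> infinite (D n))"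

lemma infinite_enc:
  assumes "infinite M" "(\<lambda>m. prod_encode (i,m)) ` M \<subseteq> S" shows "infinite S"
proof
  assume "finite S"
  then have "finite ((\<lambda>m. prod_encode (i,m)) ` M)" using assms(2) finite_subset by blast
  moreover have "inj_on (\<lambda>m. prod_encode (i,m)) M"
    by (metis (mono_tags, lifting) inj_onI prod_encode_inverse prod.inject)
  ultimately show False using assms(1) finite_imageD by blast
qed

lemma step:
  fixes X :: "'a topology" and Q :: "(nat \<Rightarrow> 'a set set) \<Rightarrow> bool"
  assumes al: "Alster X" and ne: "topspace X \<noteq> {}"
    and hyp: "\<And>U. (\<forall>n. U n \<in> GK X) \<Longrightarrow> \<exists>D. Good U D \<and> Q D"
    and U: "\<forall>n. U n \<in> GK X"
  shows "\<exists>D A. Good U D \<and> topspace X \<subseteq> \<Union>(range A)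
     \<and> (\<forall>i m. \<forall>G\<in>D (prod_encode (i,m)). A i \<subseteq> G) \<and> (\<forall>i. Q (\<lambda>m. D (prod_encode (i,m))))"
proof -
  define UK where "UK K n = {G \<in> U n. K \<subseteq> G}" for K n
  have UKgk: "compactin X K \<Longrightarrow> UK K n \<in> GK X" for K n
    unfolding UK_def using U GK_restrict by blast
  define DD where "DD K i = (SOME D. Good (\<lambda>m. UK K (prod_encode (i,m))) D \<and> Q D)" for K i
  have DD: "Good (\<lambda>m. UK K (prod_encode (i,m))) (DD K i) \<and> Q (DD K i)" if "compactin X K" for K i
  proof -
    have "\<forall>m. UK K (prod_encode (i,m)) \<in> GK X" using UKgk that by blast
    then have "\<exists>D. Good (\<lambda>m. UK K (prod_encode (i,m))) D \<and> Q D"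
      by (rule hyp)
    then show ?thesis unfolding DD_def by (rule someI_ex)
  qed
  define H where "H K = \<Inter> (\<Union>i. \<Union>m. DD K i m)" for K
  have Hp: "gdelta_in X (H K) \<and> K \<subseteq> H K \<and> H K \<noteq> topspace X" if K: "compactin X K" for K
  proof -
    have sub: "G \<in> U (prod_encode (i,m)) \<and> K \<subseteq> G" if "G \<in> DD K i m" for G i m
      using DD[OF K, of i] that unfolding Good_def UK_def by blast
    have cnt: "countable (\<Union>i. \<Union>m. DD K i m)"
      using DD[OF K] unfolding Good_def by (intro countable_UN) auto
    have "infinite (DD K 0 0)" using DD[OF K, of 0] unfolding Good_def by blast
    then obtain G0 where G0: "G0 \<in> DD K 0 0" by (metis finite.emptyI ex_in_conv)
    have gd: "gdelta_in X G" if GG: "G \<in> (\<Union>i. \<Union>m. DD K i m)" for G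
    proof -
      obtain i m where "G \<in> DD K i m" using GG by blast
      then have "G \<in> U (prod_encode (i,m))" using sub by blast
      moreover have "U (prod_encode (i,m)) \<in> GK X" using U by blast
      ultimately show ?thesis unfolding GK_def by blast
    qed
    have g1: "gdelta_in X (H K)" unfolding H_def
      using cnt G0 gd by (intro gdelta_in_Inter) auto
    have g2: "K \<subseteq> H K" unfolding H_def using sub by blast
    have "H K \<subseteq> G0" unfolding H_def using G0 by blast
    moreover have "G0 \<in> U (prod_encode (0,0))" using sub G0 by blast
    then have "G0 \<subseteq> topspace X" "G0 \<noteq> topspace X"
      using U gdelta_in_subset unfolding GK_def by blast+
    ultimately have "H K \<noteq> topspace X" by blast
    then show ?thesis using g1 g2 by blast
  qed
  define HH where "HH = H ` {K. compactin X K}"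
  have "HH \<in> GK X" unfolding GK_def
  proof (intro CollectI conjI ballI allI impI)
    fix G assume "G \<in> HH"
    then obtain K where "compactin X K" "G = H K" unfolding HH_def by blast
    then show "gdelta_in X G" using Hp by blast
  next
    show "topspace X \<notin> HH"
    proof
      assume "topspace X \<in> HH"
      then obtain K where "compactin X K" "topspace X = H K" unfolding HH_def by blast
      then show False using Hp by metis
    qed
  next
    fix K assume "compactin X K"
    then show "\<exists>G\<in>HH. K \<subseteq> G" using Hp unfolding HH_def by blast
  qed
  with al have "\<exists>V. V \<subseteq> HH \<and> countable V \<and> topspace X \<subseteq> \<Union>V"
    unfolding Alster_def by (rule bspec)
  then obtain V where V: "V \<subseteq> HH" "countable V" "topspace X \<subseteq> \<Union>V"
    by (elim exE conjE)
  have Vne: "V \<noteq> {}" using V(3) ne by blast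
  define A where "A = from_nat_into V"
  have rA: "range A = V" unfolding A_def using range_from_nat_into[OF Vne V(2)] .
  have "\<forall>i. \<exists>K. compactin X K \<and> A i = H K"
  proof
    fix i
    have "A i \<in> HH" using rA V(1) by blast
    then show "\<exists>K. compactin X K \<and> A i = H K" unfolding HH_def by blast
  qed
  then obtain KK where KK: "\<And>i. compactin X (KK i) \<and> A i = H (KK i)" by metis
  define D where "D n = DD (KK (fst (prod_decode n))) (fst (prod_decode n)) (snd (prod_decode n))" for n
  have Denc: "D (prod_encode (i,m)) = DD (KK i) i m" for i m unfolding D_def by simp
  have "Good U D" unfolding Good_def
  proof
    fix n
    obtain i m where nim: "prod_decode n = (i,m)" by (metis surj_pair)
    then have n: "n = prod_encode (i,m)" by (metis prod_decode_inverse)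
    have "Good (\<lambda>m. UK (KK i) (prod_encode (i,m))) (DD (KK i) i)" using DD KK by blast
    then have "DD (KK i) i m \<subseteq> UK (KK i) (prod_encode (i,m)) \<and> countable (DD (KK i) i m) \<and> infinite (DD (KK i) i m)"
      unfolding Good_def by blast
    moreover have "UK (KK i) (prod_encode (i,m)) \<subseteq> U n" unfolding UK_def n by blast
    ultimately show "D n \<subseteq> U n \<and> countable (D n) \<and> infinite (D n)"
      using Denc n by (metis order_trans)
  qed
  moreover have "topspace X \<subseteq> \<Union>(range A)" using rA V(3) by simp
  moreover have "\<forall>i m. \<forall>G\<in>D (prod_encode (i,m)). A i \<subseteq> G"
  proof (intro allI ballI)
    fix i m G assume "G \<in> D (prod_encode (i,m))"
    then have "G \<in> DD (KK i) i m" using Denc by simp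
    then have "H (KK i) \<subseteq> G" unfolding H_def by blast
    then show "A i \<subseteq> G" using KK by simp
  qed
  moreover have "\<forall>i. Q (\<lambda>m. D (prod_encode (i,m)))"
  proof
    fix i
    have e: "(\<lambda>m. D (prod_encode (i,m))) = DD (KK i) i" by (rule ext) (simp add: Denc)
    show "Q (\<lambda>m. D (prod_encode (i,m)))" unfolding e using DD KK by blast
  qed
  ultimately show ?thesis by blast
qed

definition Qr :: "'a topology \<Rightarrow> nat \<Rightarrow> (nat \<Rightarrow> 'a set set) \<Rightarrow> bool" where
  "Qr X r D \<longleftrightarrow> (\<forall>F. finite F \<and> F \<subseteq> topspace X \<and> card F \<le> r \<longrightarrow> infinite {m. \<forall>G\<in>D m. F \<subseteq> G})"

definition Qinf :: "'a topology \<Rightarrow> (nat \<Rightarrow> 'a set set) \<Rightarrow> bool" where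
  "Qinf X D \<longleftrightarrow> (\<forall>F. finite F \<and> F \<subseteq> topspace X \<longrightarrow> infinite {m. \<forall>G\<in>D m. F \<subseteq> G})"

lemma levels:
  fixes X :: "'a topology"
  assumes al: "Alster X" and ne: "topspace X \<noteq> {}"
  shows "\<forall>U. (\<forall>n. U n \<in> GK X) \<longrightarrow> (\<exists>D. Good U D \<and> Qr X r D)"
proof (induction r)
  case 0
  show ?case
  proof (intro allI impI)
    fix U :: "nat \<Rightarrow> 'a set set" assume U: "\<forall>n. U n \<in> GK X"
    define f where "f n = (SOME g::nat \<Rightarrow> 'a set. inj g \<and> range g \<subseteq> U n)" for n
    have f: "inj (f n) \<and> range (f n) \<subseteq> U n" for n
    proof -
      have "infinite (U n)" using GK_infinite[OF spec[OF U, of n]] .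
      then have "\<exists>g::nat \<Rightarrow> 'a set. inj g \<and> range g \<subseteq> U n" by (rule infinite_countable_subset)
      then show ?thesis unfolding f_def by (rule someI_ex)
    qed
    define D where "D n = range (f n)" for n
    have "Good U D" unfolding Good_def D_def
    proof
      fix n
      show "range (f n) \<subseteq> U n \<and> countable (range (f n)) \<and> infinite (range (f n))"
        using f[of n] range_inj_infinite[of "f n"] by simp
    qed
    moreover have "Qr X 0 D" unfolding Qr_def
    proof (intro allI impI)
      fix F :: "'a set" assume "finite F \<and> F \<subseteq> topspace X \<and> card F \<le> 0"
      then have "F = {}" by auto
      then show "infinite {m. \<forall>G\<in>D m. F \<subseteq> G}" by simp
    qed
    ultimately show "\<exists>D. Good U D \<and> Qr X 0 D" by blast
  qed
next
  case (Suc r)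
  show ?case
  proof (intro allI impI)
    fix U :: "nat \<Rightarrow> 'a set set" assume U: "\<forall>n. U n \<in> GK X"
    have hyp: "\<exists>D. Good V D \<and> Qr X r D" if "\<forall>n. V n \<in> GK X" for V
      using mp[OF spec[OF Suc.IH, of V] that] .
    obtain D A where DA: "Good U D" "topspace X \<subseteq> \<Union>(range A)"
      "\<forall>i m. \<forall>G\<in>D (prod_encode (i,m)). A i \<subseteq> G" "\<forall>i. Qr X r (\<lambda>m. D (prod_encode (i,m)))"
      using step[OF al ne hyp U] by blast
    have "Qr X (Suc r) D" unfolding Qr_def
    proof (intro allI impI)
      fix F :: "'a set" assume F: "finite F \<and> F \<subseteq> topspace X \<and> card F \<le> Suc r"
      show "infinite {m. \<forall>G\<in>D m. F \<subseteq> G}"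
      proof (cases "F = {}")
        case True then show ?thesis by simp
      next
        case False
        then obtain x where x: "x \<in> F" by blast
        then have "x \<in> topspace X" using F by blast
        then obtain i where xi: "x \<in> A i" using DA(2) by blast
        have "card (F - {x}) \<le> r" using F x by (auto simp: card_Diff_singleton)
        then have "infinite {m. \<forall>G\<in>D (prod_encode (i,m)). F - {x} \<subseteq> G}"
          using DA(4) F unfolding Qr_def by blast
        moreover have "(\<lambda>m. prod_encode (i,m)) ` {m. \<forall>G\<in>D (prod_encode (i,m)). F - {x} \<subseteq> G}
            \<subseteq> {m. \<forall>G\<in>D m. F \<subseteq> G}"
          using DA(3) xi x by blast
        ultimately show ?thesis by (rule infinite_enc)
      qed
    qed
    then show "\<exists>D. Good U D \<and> Qr X (Suc r) D" using DA(1) by blast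
  qed
qed

lemma omega:
  fixes X :: "'a topology"
  assumes al: "Alster X" and ne: "topspace X \<noteq> {}" and U: "\<forall>n. U n \<in> GK X"
  shows "\<exists>D. Good U D \<and> Qinf X D"
proof -
  define DR where "DR r = (SOME D. Good (\<lambda>m. U (prod_encode (r,m))) D \<and> Qr X r D)" for r
  have DR: "Good (\<lambda>m. U (prod_encode (r,m))) (DR r) \<and> Qr X r (DR r)" for r
  proof -
    have "\<forall>m. U (prod_encode (r,m)) \<in> GK X" using U by blast
    then have "\<exists>D. Good (\<lambda>m. U (prod_encode (r,m))) D \<and> Qr X r D"
      by (rule mp[OF spec[OF levels[OF al ne, of r], of "\<lambda>m. U (prod_encode (r,m))"]])
    then show ?thesis unfolding DR_def by (rule someI_ex)
  qed
  define D where "D n = DR (fst (prod_decode n)) (snd (prod_decode n))" for n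
  have Denc: "D (prod_encode (i,m)) = DR i m" for i m unfolding D_def by simp
  have "Good U D" unfolding Good_def
  proof
    fix n
    obtain i m where nim: "prod_decode n = (i,m)" by (metis surj_pair)
    then have n: "n = prod_encode (i,m)" by (metis prod_decode_inverse)
    have "DR i m \<subseteq> U (prod_encode (i,m)) \<and> countable (DR i m) \<and> infinite (DR i m)"
      using DR[of i] unfolding Good_def by blast
    then show "D n \<subseteq> U n \<and> countable (D n) \<and> infinite (D n)" using n Denc by simp
  qed
  moreover have "Qinf X D" unfolding Qinf_def
  proof (intro allI impI)
    fix F :: "'a set" assume F: "finite F \<and> F \<subseteq> topspace X"
    have "infinite {m. \<forall>G\<in>DR (card F) m. F \<subseteq> G}"
      using DR[of "card F"] F unfolding Qr_def by blast
    moreover have "(\<lambda>m. prod_encode (card F,m)) ` {m. \<forall>G\<in>DR (card F) m. F \<subseteq> G}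
        \<subseteq> {m. \<forall>G\<in>D m. F \<subseteq> G}" using Denc by auto
    ultimately show "infinite {m. \<forall>G\<in>D m. F \<subseteq> G}" by (rule infinite_enc)
  qed
  ultimately show ?thesis by blast
qed

lemma alster_main:
  fixes X :: "'a topology"
  assumes al: "Alster X" and ne: "topspace X \<noteq> {}"
  shows "S1 (GK X) (GOmega_gp X)"
  unfolding S1_def
proof (intro allI impI)
  fix U :: "nat \<Rightarrow> 'a set set" assume U: "\<forall>n. U n \<in> GK X"
  have hyp: "\<exists>D. Good V D \<and> Qinf X D" if "\<forall>n. V n \<in> GK X" for V
    using omega[OF al ne that] .
  obtain D A where DA: "Good U D" "topspace X \<subseteq> \<Union>(range A)"
    "\<forall>i m. \<forall>G\<in>D (prod_encode (i,m)). A i \<subseteq> G" "\<forall>i. Qinf X (\<lambda>m. D (prod_encode (i,m)))"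
    using step[OF al ne hyp U] by blast
  have infD: "\<And>n. infinite (D n)" using DA(1) unfolding Good_def by blast
  obtain b where b: "inj b" "\<And>n. b n \<in> D n" using inj_select[of D, OF infD] by blast
  have bU: "b n \<in> U n" for n using b(2)[of n] DA(1) unfolding Good_def by blast
  have bGK: "gdelta_in X (b n) \<and> b n \<subseteq> topspace X \<and> b n \<noteq> topspace X" for n
  proof -
    have "U n \<in> GK X" using U by blast
    then have "\<forall>G\<in>U n. gdelta_in X G" "topspace X \<notin> U n" unfolding GK_def by auto
    then have "gdelta_in X (b n) \<and> b n \<noteq> topspace X" using bU[of n] by metis
    then show ?thesis using gdelta_in_subset by blast
  qed
  have Ab: "A i \<subseteq> b (prod_encode (i,m))" for i m using DA(3) b(2) by blast
  have cov: "\<Union>(range b) = topspace X"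
  proof
    show "\<Union>(range b) \<subseteq> topspace X" using bGK by blast
  next
    show "topspace X \<subseteq> \<Union>(range b)"
    proof
      fix x assume "x \<in> topspace X"
      then obtain i where "x \<in> A i" using DA(2) by blast
      then have "x \<in> b (prod_encode (i,0))" using Ab by blast
      then show "x \<in> \<Union>(range b)" by blast
    qed
  qed
  have gcov: "range b \<in> GCov X" unfolding GCov_def using bGK cov by blast
  have notop: "topspace X \<notin> range b" using bGK by blast
  have om: "range b \<in> GOmega X" unfolding GOmega_def
  proof (intro CollectI conjI allI impI)
    show "range b \<in> GCov X" by (rule gcov)
    show "topspace X \<notin> range b" by (rule notop)
  next
    fix F :: "'a set" assume F: "finite F \<and> F \<subseteq> topspace X"
    have "infinite {m. \<forall>G\<in>D (prod_encode (0,m)). F \<subseteq> G}" using DA(4) F unfolding Qinf_def by blast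
    then obtain m where "\<forall>G\<in>D (prod_encode (0,m)). F \<subseteq> G" by (metis (no_types, lifting) empty_Collect_eq finite.emptyI)
    then have "F \<subseteq> b (prod_encode (0,m))" using b(2) by blast
    then show "\<exists>G\<in>range b. F \<subseteq> G" by blast
  qed
  define blk where "blk k = {n. fst (prod_decode n) + snd (prod_decode n) = k}" for k
  define P where "P k = b ` blk k" for k
  have finblk: "finite (blk k)" for k
  proof -
    have "blk k \<subseteq> prod_encode ` ({..k} \<times> {..k})"
    proof
      fix n assume "n \<in> blk k"
      then have "prod_decode n \<in> {..k} \<times> {..k}" unfolding blk_def by (cases "prod_decode n") auto
      then show "n \<in> prod_encode ` ({..k} \<times> {..k})" by (metis image_eqI prod_decode_inverse)
    qed
    then show ?thesis using finite_subset by blast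
  qed
  have gp: "range b \<in> Ggp X" unfolding Ggp_def
  proof (intro CollectI conjI exI)
    show "range b \<in> GCov X" by (rule gcov)
    show "\<forall>k. finite (P k)" unfolding P_def using finblk by blast
    show "disjoint_family P" unfolding disjoint_family_on_def P_def
    proof (intro ballI impI)
      fix k k' :: nat assume "k \<noteq> k'"
      then have "blk k \<inter> blk k' = {}" unfolding blk_def by auto
      then show "b ` blk k \<inter> b ` blk k' = {}" using b(1) by (simp add: image_Int[symmetric])
    qed
    show "range b = (\<Union>k. P k)"
    proof
      show "range b \<subseteq> (\<Union>k. P k)"
      proof
        fix G assume "G \<in> range b"
        then obtain n where "G = b n" by blast
        moreover have "n \<in> blk (fst (prod_decode n) + snd (prod_decode n))" unfolding blk_def by simp
        ultimately show "G \<in> (\<Union>k. P k)" unfolding P_def by blast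
      qed
      show "(\<Union>k. P k) \<subseteq> range b" unfolding P_def by blast
    qed
    show "\<forall>x\<in>topspace X. \<forall>\<^sub>F k in sequentially. x \<in> \<Union>(P k)"
    proof
      fix x assume "x \<in> topspace X"
      then obtain i where xi: "x \<in> A i" using DA(2) by blast
      show "\<forall>\<^sub>F k in sequentially. x \<in> \<Union>(P k)" unfolding eventually_sequentially
      proof (intro exI allI impI)
        fix k assume "i \<le> k"
        then have "prod_encode (i, k - i) \<in> blk k" unfolding blk_def by simp
        moreover have "x \<in> b (prod_encode (i, k - i))" using xi Ab by blast
        ultimately show "x \<in> \<Union>(P k)" unfolding P_def by blast
      qed
    qed
  qed
  have "range b \<in> GOmega_gp X" unfolding GOmega_gp_def using om gp by blast
  then show "\<exists>b. (\<forall>n. b n \<in> U n) \<and> range b \<in> GOmega_gp X" using bU by blast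
qed

lemma S1_mono:
  fixes A B C :: "'b set set set"
  assumes h: "S1 A B" and BC: "B \<subseteq> C" shows "S1 A C"
  unfolding S1_def
proof (intro allI impI)
  fix S :: "nat \<Rightarrow> 'b set set" assume S: "\<forall>n. S n \<in> A"
  from mp[OF spec[OF h[unfolded S1_def], of S] S]
  obtain b where "\<forall>n. b n \<in> S n" "range b \<in> B" by blast
  then show "\<exists>b. (\<forall>n. b n \<in> S n) \<and> range b \<in> C" using BC by blast
qed

lemma S1_Sfin:
  fixes A B :: "'b set set set"
  assumes h: "S1 A B" shows "Sfin A B"
  unfolding Sfin_def
proof (intro allI impI)
  fix S :: "nat \<Rightarrow> 'b set set" assume S: "\<forall>n. S n \<in> A"
  from mp[OF spec[OF h[unfolded S1_def], of S] S]
  obtain b where b: "\<forall>n. b n \<in> S n" "range b \<in> B" by blast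
  have "(\<Union>n. {b n}) = range b" by blast
  then have "(\<Union>n. {b n}) \<in> B" using b(2) by simp
  moreover have "\<forall>n. finite {b n} \<and> {b n} \<subseteq> S n" using b(1) by simp
  ultimately show "\<exists>F. (\<forall>n. finite (F n) \<and> F n \<subseteq> S n) \<and> (\<Union>n. F n) \<in> B"
    by (intro exI[of _ "\<lambda>n. {b n}"]) simp
qed

lemma Sfin_Alster:
  fixes X :: "'a topology"
  assumes h: "Sfin (GK X) (GCov X)" shows "Alster X"
  unfolding Alster_def
proof (intro ballI)
  fix U assume U: "U \<in> GK X"
  have "\<forall>n. (\<lambda>n. U) n \<in> GK X" using U by simp
  from mp[OF spec[OF h[unfolded Sfin_def], of "\<lambda>n. U"] this]
  obtain F :: "nat \<Rightarrow> 'a set set" where F: "\<forall>n. finite (F n) \<and> F n \<subseteq> U" "(\<Union>n. F n) \<in> GCov X"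
    by blast
  have "countable (\<Union>n. F n)" using F(1) by (intro countable_UN) (auto intro: countable_finite)
  moreover have "(\<Union>n. F n) \<subseteq> U" using F(1) by blast
  moreover have "topspace X \<subseteq> \<Union>(\<Union>n. F n)" using F(2) unfolding GCov_def by blast
  ultimately show "\<exists>V\<subseteq>U. countable V \<and> topspace X \<subseteq> \<Union>V" by blast
qed

lemma Sfin_mono:
  fixes A B C :: "'b set set set"
  assumes h: "Sfin A B" and BC: "B \<subseteq> C" shows "Sfin A C"
  unfolding Sfin_def
proof (intro allI impI)
  fix S :: "nat \<Rightarrow> 'b set set" assume S: "\<forall>n. S n \<in> A"
  from mp[OF spec[OF h[unfolded Sfin_def], of S] S]
  obtain F where "\<forall>n. finite (F n) \<and> F n \<subseteq> S n" "(\<Union>n. F n) \<in> B" by blast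
  then show "\<exists>F. (\<forall>n. finite (F n) \<and> F n \<subseteq> S n) \<and> (\<Union>n. F n) \<in> C" using BC by blast
qed

theorem theorem4p6:
  fixes X :: "'a topology"
  assumes "t1_space X" and "infinite (topspace X)"
  shows "(Alster X \<longleftrightarrow> S1 (GK X) (GCov X))
       \<and> (Alster X \<longleftrightarrow> S1 (GK X) (GOmega X))
       \<and> (Alster X \<longleftrightarrow> S1 (GK X) (Ggp X))
       \<and> (Alster X \<longleftrightarrow> S1 (GK X) (GOmega_gp X))
       \<and> (Alster X \<longleftrightarrow> Sfin (GK X) (GCov X))
       \<and> (Alster X \<longleftrightarrow> Sfin (GK X) (Ggp X))
       \<and> (Alster X \<longleftrightarrow> Sfin (GK X) (GOmega_gp X))"
proof -
  have ne: "topspace X \<noteq> {}" using assms(2) by auto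
  have s1: "GOmega_gp X \<subseteq> GOmega X" "GOmega_gp X \<subseteq> Ggp X" "GOmega X \<subseteq> GCov X" "Ggp X \<subseteq> GCov X"
    unfolding GOmega_gp_def GOmega_def Ggp_def by auto
  have bk: "Alster X" if "Sfin (GK X) B" "B \<subseteq> GCov X" for B
    using Sfin_Alster[OF Sfin_mono[OF that]] .
  have bkS: "Alster X" if "S1 (GK X) B" "B \<subseteq> GCov X" for B
    using bk[OF S1_Sfin[OF that(1)] that(2)] .
  have fw1: "S1 (GK X) B" if "GOmega_gp X \<subseteq> B" "Alster X" for B
    using S1_mono[OF alster_main[OF that(2) ne] that(1)] .
  have fw2: "Sfin (GK X) B" if "GOmega_gp X \<subseteq> B" "Alster X" for B
    using S1_Sfin[OF fw1[OF that]] .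
  have c1: "GOmega_gp X \<subseteq> GCov X" "GOmega_gp X \<subseteq> GOmega X" "GOmega_gp X \<subseteq> Ggp X" "GOmega_gp X \<subseteq> GOmega_gp X"
    using s1 by auto
  have c2: "GCov X \<subseteq> GCov X" "GOmega X \<subseteq> GCov X" "Ggp X \<subseteq> GCov X" "GOmega_gp X \<subseteq> GCov X"
    using s1 by auto
  show ?thesis
    apply (intro conjI iffI)
    apply (erule fw1[OF c1(1)]) apply (erule bkS[OF _ c2(1)])
    apply (erule fw1[OF c1(2)]) apply (erule bkS[OF _ c2(2)])
    apply (erule fw1[OF c1(3)]) apply (erule bkS[OF _ c2(3)])
    apply (erule fw1[OF c1(4)]) apply (erule bkS[OF _ c2(4)])
    apply (erule fw2[OF c1(1)]) apply (erule bk[OF _ c2(1)])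
    apply (erule fw2[OF c1(3)]) apply (erule bk[OF _ c2(3)])
    apply (erule fw2[OF c1(4)]) apply (erule bk[OF _ c2(4)])
    done
qed

end
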